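(* Let $m,n$ be natural numbers with $\gcd(m,n)=1$. Then the lattice $\mathcal{J}_{mn}$ is isomorphic to the direct product of lattices $\mathcal{J}_m\times\mathcal{J}_n$.
   Context: For a natural number $k$, $\mathbb{Z}_k=\{0,\dots,k-1\}$. $P(\mathbb{Z}_k,+)$ denotes the clone of all polynomial operations of the group $(\mathbb{Z}_k,+)$ (operations of the form $a_0+a_1x_1+\dots+a_sx_s$), and $P(\mathbb{Z}_k,+,\cdot)$ denotes the clone of all polynomial operations of the ring $(\mathbb{Z}_k,+,\cdot)$. $\mathcal{J}_k$ denotes the interval $[P(\mathbb{Z}_k,+),P(\mathbb{Z}_k,+,\cdot)]$ in the lattice of all clones on the set $\mathbb{Z}_k$, i.e. the lattice of all clones $C$ with $P(\mathbb{Z}_k,+)\subseteq C\subseteq P(\mathbb{Z}_k,+,\cdot)$. *)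

theory Defs
  imports Main
begin

text \<open>An n-ary operation is encoded as a pair (n, f)
  with f :: nat list => nat; f is only meaningful on argument lists of length n with entries
  in Z_k, and is normalised to 0 outside this domain so that equality of operations is
  extensional equality on Z_k^n. Arities are positive (standard convention for clones).\<close>

definition valid_args :: "nat \<Rightarrow> nat \<Rightarrow> nat list \<Rightarrow> bool" where
  "valid_args k n xs \<longleftrightarrow> length xs = n \<and> set xs \<subseteq> {..<k}"

definition ops :: "nat \<Rightarrow> nat \<Rightarrow> (nat list \<Rightarrow> nat) set" where
  "ops k n = {f. (\<forall>xs. valid_args k n xs \<longrightarrow> f xs < k) \<and>
                 (\<forall>xs. \<not> valid_args k n xs \<longrightarrow> f xs = 0)}"

definition all_ops :: "nat \<Rightarrow> (nat \<times> (nat list \<Rightarrow> nat)) set" where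
  "all_ops k = {(n, f). 0 < n \<and> f \<in> ops k n}"

definition mk_op :: "nat \<Rightarrow> nat \<Rightarrow> (nat list \<Rightarrow> nat) \<Rightarrow> nat \<times> (nat list \<Rightarrow> nat)" where
  "mk_op k n g = (n, \<lambda>xs. if valid_args k n xs then g xs else 0)"

definition proj_op :: "nat \<Rightarrow> nat \<Rightarrow> nat \<Rightarrow> nat \<times> (nat list \<Rightarrow> nat)" where
  "proj_op k n i = mk_op k n (\<lambda>xs. xs ! i)"

definition is_clone :: "nat \<Rightarrow> (nat \<times> (nat list \<Rightarrow> nat)) set \<Rightarrow> bool" where
  "is_clone k C \<longleftrightarrow> C \<subseteq> all_ops k \<and>
     (\<forall>n i. 0 < n \<and> i < n \<longrightarrow> proj_op k n i \<in> C) \<and>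
     (\<forall>m f n gs. (m, f) \<in> C \<and> length gs = m \<and> 0 < n \<and> (\<forall>g\<in>set gs. (n, g) \<in> C)
         \<longrightarrow> mk_op k n (\<lambda>xs. f (map (\<lambda>g. g xs) gs)) \<in> C)"

definition clone_gen :: "nat \<Rightarrow> (nat \<times> (nat list \<Rightarrow> nat)) set \<Rightarrow> (nat \<times> (nat list \<Rightarrow> nat)) set" where
  "clone_gen k F = \<Inter> {C. is_clone k C \<and> F \<subseteq> C}"

definition add_op :: "nat \<Rightarrow> nat \<times> (nat list \<Rightarrow> nat)" where
  "add_op k = mk_op k 2 (\<lambda>xs. (xs ! 0 + xs ! 1) mod k)"

definition mult_op :: "nat \<Rightarrow> nat \<times> (nat list \<Rightarrow> nat)" where
  "mult_op k = mk_op k 2 (\<lambda>xs. (xs ! 0 * xs ! 1) mod k)"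

definition const_ops :: "nat \<Rightarrow> (nat \<times> (nat list \<Rightarrow> nat)) set" where
  "const_ops k = {mk_op k 1 (\<lambda>_. a) | a. a < k}"

definition P_group :: "nat \<Rightarrow> (nat \<times> (nat list \<Rightarrow> nat)) set" where
  "P_group k = {mk_op k n (\<lambda>xs. (a0 + (\<Sum>i<n. a i * xs ! i)) mod k) | n a0 a. 0 < n}"

definition P_ring :: "nat \<Rightarrow> (nat \<times> (nat list \<Rightarrow> nat)) set" where
  "P_ring k = clone_gen k ({add_op k, mult_op k} \<union> const_ops k)"

definition J :: "nat \<Rightarrow> (nat \<times> (nat list \<Rightarrow> nat)) set set" where
  "J k = {C. is_clone k C \<and> P_group k \<subseteq> C \<and> C \<subseteq> P_ring k}"

end

theory Submission
  imports Defs "HOL-Number_Theory.Cong"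
begin

lemma valid_mono: "valid_args m a xs \<Longrightarrow> m \<le> k \<Longrightarrow> valid_args k a xs"
  unfolding valid_args_def by auto

lemma valid_pos: "valid_args k a xs \<Longrightarrow> 0 < a \<Longrightarrow> 0 < k"
  unfolding valid_args_def by (cases xs) auto

lemma valid_nth: "valid_args k a xs \<Longrightarrow> i < a \<Longrightarrow> xs ! i < k"
  unfolding valid_args_def by (auto simp: subset_iff)

lemma mk_op_cong: "(\<And>xs. valid_args k a xs \<Longrightarrow> g xs = g' xs) \<Longrightarrow> mk_op k a g = mk_op k a g'"
  unfolding mk_op_def by auto

lemma fst_mk_op[simp]: "fst (mk_op k a g) = a"
  by (simp add: mk_op_def)

lemma snd_mk_op_valid: "valid_args k a xs \<Longrightarrow> snd (mk_op k a g) xs = g xs"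
  by (simp add: mk_op_def)

lemma all_ops_mk: "h \<in> all_ops k \<Longrightarrow> mk_op k (fst h) (snd h) = h"
  unfolding all_ops_def ops_def mk_op_def by (cases h) auto

lemma mk_op_in_all_ops: "0 < a \<Longrightarrow> (\<And>xs. valid_args k a xs \<Longrightarrow> g xs < k) \<Longrightarrow> mk_op k a g \<in> all_ops k"
  unfolding all_ops_def ops_def mk_op_def by auto

lemma all_ops_lt: "(a, f) \<in> all_ops k \<Longrightarrow> valid_args k a xs \<Longrightarrow> f xs < k"
  unfolding all_ops_def ops_def by auto

lemma all_ops_pos: "h \<in> all_ops k \<Longrightarrow> 0 < fst h"
  unfolding all_ops_def by auto

lemma clone_all_ops: "is_clone k (all_ops k)"
  unfolding is_clone_def
proof (intro conjI allI impI)
  fix n i :: nat assume "0 < n \<and> i < n"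
  then show "proj_op k n i \<in> all_ops k"
    unfolding proj_op_def by (auto intro!: mk_op_in_all_ops simp: valid_nth)
next
  fix m f n gs
  assume a: "(m, f) \<in> all_ops k \<and> length gs = m \<and> 0 < n \<and> (\<forall>g\<in>set gs. (n, g) \<in> all_ops k)"
  show "mk_op k n (\<lambda>xs. f (map (\<lambda>g. g xs) gs)) \<in> all_ops k"
  proof (rule mk_op_in_all_ops)
    show "0 < n" using a by simp
    fix xs assume v: "valid_args k n xs"
    have "valid_args k m (map (\<lambda>g. g xs) gs)"
      using a v all_ops_lt unfolding valid_args_def by fastforce
    then show "f (map (\<lambda>g. g xs) gs) < k" using a all_ops_lt by blast
  qed
qed simp

lemma clone_gen_mem: "x \<in> clone_gen k F \<longleftrightarrow> (\<forall>C. is_clone k C \<and> F \<subseteq> C \<longrightarrow> x \<in> C)"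
  unfolding clone_gen_def by auto

lemma clone_gen_clone:
  assumes "F \<subseteq> all_ops k" shows "is_clone k (clone_gen k F)"
proof -
  have ne: "clone_gen k F \<subseteq> all_ops k" using assms clone_all_ops clone_gen_mem by blast
  show ?thesis
    unfolding is_clone_def
  proof (intro conjI allI impI)
    show "clone_gen k F \<subseteq> all_ops k" by (rule ne)
  next
    fix n i :: nat assume "0 < n \<and> i < n"
    then show "proj_op k n i \<in> clone_gen k F"
      unfolding is_clone_def clone_gen_mem by auto
  next
    fix m f n gs
    assume a: "(m, f) \<in> clone_gen k F \<and> length gs = m \<and> 0 < n \<and>
      (\<forall>g\<in>set gs. (n, g) \<in> clone_gen k F)"
    show "mk_op k n (\<lambda>xs. f (map (\<lambda>g. g xs) gs)) \<in> clone_gen k F"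
      unfolding clone_gen_mem
    proof (intro allI impI)
      fix C assume c: "is_clone k C \<and> F \<subseteq> C"
      have "(m, f) \<in> C" "\<forall>g\<in>set gs. (n, g) \<in> C" using a c clone_gen_mem by blast+
      then show "mk_op k n (\<lambda>xs. f (map (\<lambda>g. g xs) gs)) \<in> C"
        using c a unfolding is_clone_def by blast
    qed
  qed
qed

lemma clone_gen_least: "is_clone k S \<Longrightarrow> F \<subseteq> S \<Longrightarrow> clone_gen k F \<subseteq> S"
  unfolding clone_gen_def by auto

lemma clone_gen_sup: "F \<subseteq> clone_gen k F"
  unfolding clone_gen_def by auto

lemma gens_all_ops: "{add_op k, mult_op k} \<union> const_ops k \<subseteq> all_ops k"
  unfolding add_op_def mult_op_def const_ops_def
  by (auto intro!: mk_op_in_all_ops dest: valid_pos)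

lemma P_ring_clone: "is_clone k (P_ring k)"
  unfolding P_ring_def by (rule clone_gen_clone[OF gens_all_ops])

lemma P_ring_all_ops: "P_ring k \<subseteq> all_ops k"
  using P_ring_clone unfolding is_clone_def by blast

lemma P_ring_gens: "add_op k \<in> P_ring k" "mult_op k \<in> P_ring k" "const_ops k \<subseteq> P_ring k"
  using clone_gen_sup[of "{add_op k, mult_op k} \<union> const_ops k" k] unfolding P_ring_def by auto

lemma P_ring_least: "is_clone k S \<Longrightarrow> add_op k \<in> S \<Longrightarrow> mult_op k \<in> S \<Longrightarrow> const_ops k \<subseteq> S \<Longrightarrow> P_ring k \<subseteq> S"
  unfolding P_ring_def by (rule clone_gen_least) auto

lemma clone_sub: "is_clone k C \<Longrightarrow> C \<subseteq> all_ops k"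
  unfolding is_clone_def by blast

lemma clone_proj: "is_clone k C \<Longrightarrow> i < a \<Longrightarrow> mk_op k a (\<lambda>xs. xs ! i) \<in> C"
  unfolding is_clone_def proj_op_def by auto

lemma clone_comp: "is_clone k C \<Longrightarrow> (a', f) \<in> C \<Longrightarrow> length gs = a' \<Longrightarrow> 0 < a \<Longrightarrow>
   (\<forall>g\<in>set gs. (a, g) \<in> C) \<Longrightarrow> mk_op k a (\<lambda>xs. f (map (\<lambda>g. g xs) gs)) \<in> C"
  unfolding is_clone_def by blast

lemma comp2_mk:
  assumes C: "is_clone k C" and F: "mk_op k 2 F \<in> C" and Ga: "mk_op k a Ga \<in> C"
    and Gb: "mk_op k a Gb \<in> C" and a: "0 < a"
    and lt: "\<And>xs. valid_args k a xs \<Longrightarrow> Ga xs < k \<and> Gb xs < k"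
  shows "mk_op k a (\<lambda>xs. F [Ga xs, Gb xs]) \<in> C"
proof -
  have "mk_op k a (\<lambda>xs. snd (mk_op k 2 F) (map (\<lambda>g. g xs) [snd (mk_op k a Ga), snd (mk_op k a Gb)])) \<in> C"
    using clone_comp[OF C, of 2 "snd (mk_op k 2 F)" "[snd (mk_op k a Ga), snd (mk_op k a Gb)]" a] F Ga Gb a
    by (simp add: mk_op_def)
  also have "mk_op k a (\<lambda>xs. snd (mk_op k 2 F) (map (\<lambda>g. g xs) [snd (mk_op k a Ga), snd (mk_op k a Gb)]))
     = mk_op k a (\<lambda>xs. F [Ga xs, Gb xs])"
  proof (rule mk_op_cong)
    fix xs assume v: "valid_args k a xs"
    then have "valid_args k 2 [Ga xs, Gb xs]" using lt by (simp add: valid_args_def)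
    then show "snd (mk_op k 2 F) (map (\<lambda>g. g xs) [snd (mk_op k a Ga), snd (mk_op k a Gb)]) = F [Ga xs, Gb xs]"
      using v by (simp add: mk_op_def)
  qed
  finally show ?thesis .
qed

lemma comp1_mk:
  assumes C: "is_clone k C" and F: "mk_op k 1 F \<in> C" and Ga: "mk_op k a Ga \<in> C"
    and a: "0 < a"
    and lt: "\<And>xs. valid_args k a xs \<Longrightarrow> Ga xs < k"
  shows "mk_op k a (\<lambda>xs. F [Ga xs]) \<in> C"
proof -
  have "mk_op k a (\<lambda>xs. snd (mk_op k 1 F) (map (\<lambda>g. g xs) [snd (mk_op k a Ga)])) \<in> C"
    using clone_comp[OF C, of 1 "snd (mk_op k 1 F)" "[snd (mk_op k a Ga)]" a] F Ga a
    by (simp add: mk_op_def)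
  also have "mk_op k a (\<lambda>xs. snd (mk_op k 1 F) (map (\<lambda>g. g xs) [snd (mk_op k a Ga)]))
     = mk_op k a (\<lambda>xs. F [Ga xs])"
  proof (rule mk_op_cong)
    fix xs assume v: "valid_args k a xs"
    then have "valid_args k 1 [Ga xs]" using lt by (simp add: valid_args_def)
    then show "snd (mk_op k 1 F) (map (\<lambda>g. g xs) [snd (mk_op k a Ga)]) = F [Ga xs]"
      using v by (simp add: mk_op_def)
  qed
  finally show ?thesis .
qed

lemma const_P_ring:
  assumes "b < k" "0 < a" shows "mk_op k a (\<lambda>_. b) \<in> P_ring k"
proof -
  have F: "mk_op k 1 (\<lambda>_. b) \<in> P_ring k" using P_ring_gens(3) assms unfolding const_ops_def by auto
  have G: "mk_op k a (\<lambda>xs. xs ! 0) \<in> P_ring k" using clone_proj[OF P_ring_clone] assms by auto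
  show ?thesis using comp1_mk[OF P_ring_clone F G assms(2)] valid_nth assms(2) by auto
qed

lemma lin_P_ring_aux:
  assumes k: "0 < k" and a: "0 < a" and j: "j \<le> a"
  shows "mk_op k a (\<lambda>xs. (a0 + (\<Sum>i<j. c i * xs ! i)) mod k) \<in> P_ring k"
  using j
proof (induction j)
  case 0
  have "mk_op k a (\<lambda>_. a0 mod k) \<in> P_ring k" using const_P_ring k a by auto
  then show ?case by simp
next
  case (Suc j)
  have jl: "j < a" using Suc.prems by simp
  have M0: "mk_op k a (\<lambda>xs. (\<lambda>ys. (ys ! 0 * ys ! 1) mod k) [c j mod k, xs ! j]) \<in> P_ring k"
  proof (rule comp2_mk[OF P_ring_clone])
    show "mk_op k 2 (\<lambda>ys. (ys ! 0 * ys ! 1) mod k) \<in> P_ring k" using P_ring_gens(2) unfolding mult_op_def .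
    show "mk_op k a (\<lambda>_. c j mod k) \<in> P_ring k" by (rule const_P_ring) (simp_all add: k a)
    show "mk_op k a (\<lambda>xs. xs ! j) \<in> P_ring k" by (rule clone_proj[OF P_ring_clone]) (rule jl)
    show "0 < a" by (rule a)
    fix xs assume "valid_args k a xs" then show "c j mod k < k \<and> xs ! j < k" using valid_nth k jl by auto
  qed
  have M: "mk_op k a (\<lambda>xs. (c j * xs ! j) mod k) \<in> P_ring k"
    using M0 by (simp add: mod_mult_left_eq)
  have IH: "mk_op k a (\<lambda>xs. (a0 + (\<Sum>i<j. c i * xs ! i)) mod k) \<in> P_ring k"
    using Suc by simp
  have A: "mk_op k a (\<lambda>xs. (\<lambda>ys. (ys ! 0 + ys ! 1) mod k) [(a0 + (\<Sum>i<j. c i * xs ! i)) mod k, (c j * xs ! j) mod k]) \<in> P_ring k"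
  proof (rule comp2_mk[OF P_ring_clone])
    show "mk_op k 2 (\<lambda>ys. (ys ! 0 + ys ! 1) mod k) \<in> P_ring k" using P_ring_gens(1) unfolding add_op_def .
    show "0 < a" by (rule a)
    fix xs assume "valid_args k a xs" then show "(a0 + (\<Sum>i<j. c i * xs ! i)) mod k < k \<and> (c j * xs ! j) mod k < k"
      using k by auto
  qed (rule IH, rule M)
  have "mk_op k a (\<lambda>xs. (\<lambda>ys. (ys ! 0 + ys ! 1) mod k) [(a0 + (\<Sum>i<j. c i * xs ! i)) mod k, (c j * xs ! j) mod k])
     = mk_op k a (\<lambda>xs. (a0 + (\<Sum>i<Suc j. c i * xs ! i)) mod k)"
    by (rule mk_op_cong) (simp add: mod_add_eq add.assoc)
  then show ?case using A by simp
qed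

lemma P_group_P_ring: "0 < k \<Longrightarrow> P_group k \<subseteq> P_ring k"
  unfolding P_group_def using lin_P_ring_aux by blast

definition pres :: "nat \<Rightarrow> nat \<Rightarrow> nat \<times> (nat list \<Rightarrow> nat) \<Rightarrow> bool" where
  "pres k m h \<longleftrightarrow> (\<forall>xs ys. valid_args k (fst h) xs \<longrightarrow> valid_args k (fst h) ys \<longrightarrow>
      map (\<lambda>x. x mod m) xs = map (\<lambda>x. x mod m) ys \<longrightarrow> snd h xs mod m = snd h ys mod m)"

definition prj :: "nat \<Rightarrow> nat \<times> (nat list \<Rightarrow> nat) \<Rightarrow> nat \<times> (nat list \<Rightarrow> nat)" where
  "prj m h = mk_op m (fst h) (\<lambda>xs. snd h xs mod m)"

lemma presD: "pres k m (a, g) \<Longrightarrow> valid_args k a xs \<Longrightarrow> valid_args k a ys \<Longrightarrow>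
  map (\<lambda>x. x mod m) xs = map (\<lambda>x. x mod m) ys \<Longrightarrow> g xs mod m = g ys mod m"
  unfolding pres_def fst_conv snd_conv by blast

lemma pres_mk: "(\<And>xs ys. valid_args k a xs \<Longrightarrow> valid_args k a ys \<Longrightarrow>
  map (\<lambda>x. x mod m) xs = map (\<lambda>x. x mod m) ys \<Longrightarrow> g xs mod m = g ys mod m) \<Longrightarrow> pres k m (mk_op k a g)"
  unfolding pres_def fst_mk_op by (metis snd_mk_op_valid)

lemma fst_prj[simp]: "fst (prj m h) = fst h"
  by (simp add: prj_def)

lemma map_mod_nth: "map (\<lambda>x. x mod m) xs = map (\<lambda>x. x mod m) ys \<Longrightarrow> i < length xs \<Longrightarrow> xs ! i mod m = ys ! i mod m"
  by (metis length_map nth_map)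

lemma P_ring_pres:
  assumes k: "0 < k" and md: "m dvd k"
  shows "h \<in> P_ring k \<Longrightarrow> pres k m h"
proof -
  let ?S = "{h \<in> all_ops k. pres k m h}"
  have cl: "is_clone k ?S"
    unfolding is_clone_def
  proof (intro conjI allI impI)
    show "?S \<subseteq> all_ops k" by blast
  next
    fix n i :: nat assume ni: "0 < n \<and> i < n"
    have "proj_op k n i \<in> all_ops k" using clone_all_ops ni unfolding is_clone_def by blast
    moreover have "pres k m (proj_op k n i)"
      unfolding proj_op_def
    proof (rule pres_mk)
      fix xs ys assume v: "valid_args k n xs" "valid_args k n ys"
        and e: "map (\<lambda>x. x mod m) xs = map (\<lambda>x. x mod m) ys"
      have "i < length xs" using v ni unfolding valid_args_def by auto
      then show "xs ! i mod m = ys ! i mod m" using map_mod_nth[OF e] by blast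
    qed
    ultimately show "proj_op k n i \<in> ?S" by blast
  next
    fix a' f a gs
    assume A: "(a', f) \<in> ?S \<and> length gs = a' \<and> 0 < a \<and> (\<forall>g\<in>set gs. (a, g) \<in> ?S)"
    have "mk_op k a (\<lambda>xs. f (map (\<lambda>g. g xs) gs)) \<in> all_ops k"
      using A clone_comp[OF clone_all_ops, where a'=a' and f=f and gs=gs and a=a] by blast
    moreover have "pres k m (mk_op k a (\<lambda>xs. f (map (\<lambda>g. g xs) gs)))"
      unfolding pres_def
    proof (intro allI impI)
      fix xs ys
      assume v: "valid_args k (fst (mk_op k a (\<lambda>xs. f (map (\<lambda>g. g xs) gs)))) xs"
        "valid_args k (fst (mk_op k a (\<lambda>xs. f (map (\<lambda>g. g xs) gs)))) ys"
        and e: "map (\<lambda>x. x mod m) xs = map (\<lambda>x. x mod m) ys"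
      have vx: "valid_args k a xs" and vy: "valid_args k a ys" using v by auto
      have gA: "(a, g) \<in> all_ops k \<and> pres k m (a, g)" if "g \<in> set gs" for g
        using A that by blast
      have "\<forall>g\<in>set gs. g xs < k" "\<forall>g\<in>set gs. g ys < k"
        using gA all_ops_lt[OF _ vx] all_ops_lt[OF _ vy] by auto
      then have U: "valid_args k a' (map (\<lambda>g. g xs) gs)" "valid_args k a' (map (\<lambda>g. g ys) gs)"
        using A unfolding valid_args_def by auto
      have "\<forall>g\<in>set gs. g xs mod m = g ys mod m"
        using gA presD[OF _ vx vy e] by auto
      then have me: "map (\<lambda>x. x mod m) (map (\<lambda>g. g xs) gs) = map (\<lambda>x. x mod m) (map (\<lambda>g. g ys) gs)"
        by (simp add: map_eq_conv)
      have pf: "pres k m (a', f)" using A by blast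
      then have "f (map (\<lambda>g. g xs) gs) mod m = f (map (\<lambda>g. g ys) gs) mod m"
        using presD[OF _ U me] by auto
      then show "snd (mk_op k a (\<lambda>xs. f (map (\<lambda>g. g xs) gs))) xs mod m =
           snd (mk_op k a (\<lambda>xs. f (map (\<lambda>g. g xs) gs))) ys mod m"
        using vx vy by (simp add: snd_mk_op_valid)
    qed
    ultimately show "mk_op k a (\<lambda>xs. f (map (\<lambda>g. g xs) gs)) \<in> ?S" by blast
  qed
  have g: "add_op k \<in> ?S" "mult_op k \<in> ?S" "const_ops k \<subseteq> ?S"
  proof -
    have "pres k m (add_op k)" unfolding add_op_def
    proof (rule pres_mk)
      fix xs ys assume v: "valid_args k 2 xs" "valid_args k 2 ys"
        and e: "map (\<lambda>x. x mod m) xs = map (\<lambda>x. x mod m) ys"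
      have l: "length xs = 2" using v(1) unfolding valid_args_def by blast
      have "xs ! 0 mod m = ys ! 0 mod m" "xs ! 1 mod m = ys ! 1 mod m"
        using map_mod_nth[OF e, of 0] map_mod_nth[OF e, of 1] l by simp_all
      note eqs = this
      have "(xs ! 0 + xs ! 1) mod k mod m = (xs ! 0 + xs ! 1) mod m" by (rule mod_mod_cancel[OF md])
      also have "\<dots> = (ys ! 0 + ys ! 1) mod m" by (rule mod_add_cong) (rule eqs(1), rule eqs(2))
      also have "\<dots> = (ys ! 0 + ys ! 1) mod k mod m" by (rule mod_mod_cancel[OF md, symmetric])
      finally show "(xs ! 0 + xs ! 1) mod k mod m = (ys ! 0 + ys ! 1) mod k mod m" .
    qed
    then show "add_op k \<in> ?S" using gens_all_ops[of k] by blast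
    have "pres k m (mult_op k)" unfolding mult_op_def
    proof (rule pres_mk)
      fix xs ys assume v: "valid_args k 2 xs" "valid_args k 2 ys"
        and e: "map (\<lambda>x. x mod m) xs = map (\<lambda>x. x mod m) ys"
      have l: "length xs = 2" using v(1) unfolding valid_args_def by blast
      have "xs ! 0 mod m = ys ! 0 mod m" "xs ! 1 mod m = ys ! 1 mod m"
        using map_mod_nth[OF e, of 0] map_mod_nth[OF e, of 1] l by simp_all
      note eqs = this
      have "(xs ! 0 * xs ! 1) mod k mod m = (xs ! 0 * xs ! 1) mod m" by (rule mod_mod_cancel[OF md])
      also have "\<dots> = (ys ! 0 * ys ! 1) mod m" by (rule mod_mult_cong) (rule eqs(1), rule eqs(2))
      also have "\<dots> = (ys ! 0 * ys ! 1) mod k mod m" by (rule mod_mod_cancel[OF md, symmetric])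
      finally show "(xs ! 0 * xs ! 1) mod k mod m = (ys ! 0 * ys ! 1) mod k mod m" .
    qed
    then show "mult_op k \<in> ?S" using gens_all_ops[of k] by blast
    have "pres k m c" if cin: "c \<in> const_ops k" for c
    proof -
      obtain b where c: "c = mk_op k 1 (\<lambda>_. b)" using cin unfolding const_ops_def by blast
      show ?thesis unfolding c by (rule pres_mk) simp
    qed
    then show "const_ops k \<subseteq> ?S" using gens_all_ops[of k] by blast
  qed
  show "h \<in> P_ring k \<Longrightarrow> pres k m h" using P_ring_least[OF cl g] by blast
qed

lemma dvd_le_pos: "0 < k \<Longrightarrow> m dvd k \<Longrightarrow> m \<le> (k::nat)"
  by (simp add: dvd_imp_le)

lemma dvd_pos: "0 < k \<Longrightarrow> m dvd (k::nat) \<Longrightarrow> 0 < m"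
  by (metis dvd_0_left_iff gr0I less_irrefl)

lemma prj_mk:
  assumes k: "0 < k" and md: "m dvd k"
  shows "prj m (mk_op k a g) = mk_op m a (\<lambda>xs. g xs mod m)"
  unfolding prj_def fst_mk_op
proof (rule mk_op_cong)
  fix xs assume "valid_args m a xs"
  then have "valid_args k a xs" using valid_mono dvd_le_pos[OF k md] by blast
  then show "snd (mk_op k a g) xs mod m = g xs mod m" by (simp add: snd_mk_op_valid)
qed

lemma prj_all_ops:
  assumes m: "0 < m" and h: "h \<in> all_ops k"
  shows "prj m h \<in> all_ops m"
  unfolding prj_def using all_ops_pos[OF h] m by (intro mk_op_in_all_ops) auto

lemma prj_proj:
  assumes k: "0 < k" and md: "m dvd k" and i: "i < a"
  shows "prj m (mk_op k a (\<lambda>xs. xs ! i)) = mk_op m a (\<lambda>xs. xs ! i)"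
  unfolding prj_mk[OF k md]
proof (rule mk_op_cong)
  fix xs assume v: "valid_args m a xs"
  show "xs ! i mod m = xs ! i" using valid_nth[OF v i] by simp
qed

lemma presD': "pres k m h \<Longrightarrow> valid_args k (fst h) xs \<Longrightarrow> valid_args k (fst h) ys \<Longrightarrow>
  map (\<lambda>x. x mod m) xs = map (\<lambda>x. x mod m) ys \<Longrightarrow> snd h xs mod m = snd h ys mod m"
  unfolding pres_def by blast

lemma map_mod_mod: "map (\<lambda>x. x mod m) (map (\<lambda>x. x mod (m::nat)) xs) = map (\<lambda>x. x mod m) xs"
  by simp

lemma valid_map_mod:
  assumes k: "0 < k" and md: "m dvd k" and v: "valid_args k a xs"
  shows "valid_args m a (map (\<lambda>x. x mod m) xs)" "valid_args k a (map (\<lambda>x. x mod m) xs)"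
proof -
  have m: "0 < m" using dvd_pos[OF k md] .
  show "valid_args m a (map (\<lambda>x. x mod m) xs)" using v m unfolding valid_args_def by auto
  then show "valid_args k a (map (\<lambda>x. x mod m) xs)" using valid_mono dvd_le_pos[OF k md] by blast
qed

lemma pres_reduce:
  assumes k: "0 < k" and md: "m dvd k" and p: "pres k m h" and v: "valid_args k (fst h) xs"
  shows "snd h xs mod m = snd h (map (\<lambda>x. x mod m) xs) mod m"
  using presD'[OF p v valid_map_mod(2)[OF k md v]] map_mod_mod[of m xs] by simp

lemma prj_eq_mod:
  assumes k: "0 < k" and md: "m dvd k" and p: "pres k m h" and p': "pres k m h'"
    and e: "prj m h = prj m h'" and v: "valid_args k (fst h) xs"
  shows "snd h xs mod m = snd h' xs mod m"
proof -
  have f: "fst h' = fst h" using arg_cong[OF e, of fst] by simp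
  let ?xs = "map (\<lambda>x. x mod m) xs"
  have vm: "valid_args m (fst h) ?xs" using valid_map_mod(1)[OF k md v] .
  have "snd (prj m h) ?xs = snd h ?xs mod m" "snd (prj m h') ?xs = snd h' ?xs mod m"
    using vm f unfolding prj_def by (simp_all add: snd_mk_op_valid)
  then have "snd h ?xs mod m = snd h' ?xs mod m" using e by simp
  moreover have "snd h xs mod m = snd h ?xs mod m" by (rule pres_reduce[OF k md p v])
  moreover have "snd h' xs mod m = snd h' ?xs mod m" using pres_reduce[OF k md p'] v f by simp
  ultimately show ?thesis by simp
qed

lemma prj_comp:
  assumes k: "0 < k" and md: "m dvd k" and f: "(a', f) \<in> all_ops k" and pf: "pres k m (a', f)"
    and len: "length gs = a'" and gs: "\<forall>g\<in>set gs. (a, g) \<in> all_ops k"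
  shows "prj m (mk_op k a (\<lambda>xs. f (map (\<lambda>g. g xs) gs))) =
    mk_op m a (\<lambda>xs. snd (prj m (a', f)) (map (\<lambda>g. g xs) (map (\<lambda>g. snd (prj m (a, g))) gs)))"
  unfolding prj_mk[OF k md]
proof (rule mk_op_cong)
  fix xs assume v: "valid_args m a xs"
  have m: "0 < m" using dvd_pos[OF k md] .
  have vk: "valid_args k a xs" using valid_mono[OF v dvd_le_pos[OF k md]] .
  let ?U = "map (\<lambda>g. g xs) gs" and ?U' = "map (\<lambda>g. g xs mod m) gs"
  have e1: "map (\<lambda>g. g xs) (map (\<lambda>g. snd (prj m (a, g))) gs) = ?U'"
    unfolding prj_def by (simp add: snd_mk_op_valid[OF v])
  have vU': "valid_args m a' ?U'" using len m unfolding valid_args_def by auto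
  have vU'k: "valid_args k a' ?U'" using valid_mono[OF vU' dvd_le_pos[OF k md]] .
  have lt: "\<forall>g\<in>set gs. g xs < k" using gs all_ops_lt[OF _ vk] by blast
  have vU: "valid_args k a' ?U" using len lt unfolding valid_args_def by auto
  have mm: "map (\<lambda>x. x mod m) ?U' = map (\<lambda>x. x mod m) ?U" by simp
  have "snd (prj m (a', f)) ?U' = f ?U' mod m" unfolding prj_def by (simp add: snd_mk_op_valid[OF vU'])
  also have "\<dots> = f ?U mod m" using presD[OF pf vU'k vU mm] .
  finally show "f ?U mod m = snd (prj m (a', f)) (map (\<lambda>g. g xs) (map (\<lambda>g. snd (prj m (a, g))) gs))"
    unfolding e1 by (rule sym)
qed

lemma prj_pair: "prj m (a, g) = (a, snd (prj m (a, g)))"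
  by (simp add: prj_def mk_op_def)

lemma clone_Int:
  assumes A: "is_clone k A" and B: "is_clone k B" shows "is_clone k (A \<inter> B)"
  unfolding is_clone_def
proof (intro conjI allI impI)
  show "A \<inter> B \<subseteq> all_ops k" using clone_sub[OF A] by blast
next
  fix n i :: nat assume "0 < n \<and> i < n"
  then show "proj_op k n i \<in> A \<inter> B" using A B unfolding is_clone_def by simp
next
  fix m f n gs
  assume h: "(m, f) \<in> A \<inter> B \<and> length gs = m \<and> 0 < n \<and> (\<forall>g\<in>set gs. (n, g) \<in> A \<inter> B)"
  then have h1: "(m, f) \<in> A" "(m, f) \<in> B" "length gs = m" "0 < n" "\<forall>g\<in>set gs. (n, g) \<in> A"
     "\<forall>g\<in>set gs. (n, g) \<in> B" by simp_all
  have "mk_op k n (\<lambda>xs. f (map (\<lambda>g. g xs) gs)) \<in> A" by (rule clone_comp[OF A h1(1,3,4,5)])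
  moreover have "mk_op k n (\<lambda>xs. f (map (\<lambda>g. g xs) gs)) \<in> B" by (rule clone_comp[OF B h1(2,3,4,6)])
  ultimately show "mk_op k n (\<lambda>xs. f (map (\<lambda>g. g xs) gs)) \<in> A \<inter> B" by blast
qed

lemma preim_clone:
  assumes k: "0 < k" and md: "m dvd k" and C1: "is_clone m C1"
  shows "is_clone k {h \<in> P_ring k. prj m h \<in> C1}"
  unfolding is_clone_def
proof (intro conjI allI impI)
  show "{h \<in> P_ring k. prj m h \<in> C1} \<subseteq> all_ops k" using P_ring_all_ops by blast
next
  fix n i :: nat assume ni: "0 < n \<and> i < n"
  have "proj_op k n i \<in> P_ring k" using clone_proj[OF P_ring_clone] ni unfolding proj_op_def by simp
  moreover have "prj m (proj_op k n i) = proj_op m n i"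
    unfolding proj_op_def using prj_proj[OF k md] ni by simp
  moreover have "proj_op m n i \<in> C1" using clone_proj[OF C1] ni unfolding proj_op_def by simp
  ultimately show "proj_op k n i \<in> {h \<in> P_ring k. prj m h \<in> C1}" by simp
next
  fix a' f a gs
  assume A: "(a', f) \<in> {h \<in> P_ring k. prj m h \<in> C1} \<and> length gs = a' \<and> 0 < a \<and>
     (\<forall>g\<in>set gs. (a, g) \<in> {h \<in> P_ring k. prj m h \<in> C1})"
  have fP: "(a', f) \<in> P_ring k" and fC: "prj m (a', f) \<in> C1" and len: "length gs = a'" and a: "0 < a"
    using A by simp_all
  have gP: "\<forall>g\<in>set gs. (a, g) \<in> P_ring k" and gC: "\<forall>g\<in>set gs. prj m (a, g) \<in> C1"
    using A by simp_all
  have H: "mk_op k a (\<lambda>xs. f (map (\<lambda>g. g xs) gs)) \<in> P_ring k"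
    using clone_comp[OF P_ring_clone fP len a gP] .
  have e: "prj m (mk_op k a (\<lambda>xs. f (map (\<lambda>g. g xs) gs))) =
    mk_op m a (\<lambda>xs. snd (prj m (a', f)) (map (\<lambda>g. g xs) (map (\<lambda>g. snd (prj m (a, g))) gs)))"
    using prj_comp[OF k md _ P_ring_pres[OF k md fP] len] fP gP P_ring_all_ops by blast
  have fC': "(a', snd (prj m (a', f))) \<in> C1" using fC prj_pair[of m a' f] by simp
  have gC': "\<forall>g\<in>set (map (\<lambda>g. snd (prj m (a, g))) gs). (a, g) \<in> C1"
  proof
    fix g' assume "g' \<in> set (map (\<lambda>g. snd (prj m (a, g))) gs)"
    then obtain g where g: "g \<in> set gs" "g' = snd (prj m (a, g))" by auto
    then show "(a, g') \<in> C1" using gC prj_pair[of m a g] by metis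
  qed
  have "mk_op m a (\<lambda>xs. snd (prj m (a', f)) (map (\<lambda>g. g xs) (map (\<lambda>g. snd (prj m (a, g))) gs))) \<in> C1"
    by (rule clone_comp[OF C1 fC' _ a gC']) (simp add: len)
  then show "mk_op k a (\<lambda>xs. f (map (\<lambda>g. g xs) gs)) \<in> {h \<in> P_ring k. prj m h \<in> C1}"
    using H e by simp
qed

lemma prj_add: "0 < k \<Longrightarrow> m dvd k \<Longrightarrow> prj m (add_op k) = add_op m"
  unfolding add_op_def by (simp add: prj_mk mod_mod_cancel)

lemma prj_mult: "0 < k \<Longrightarrow> m dvd k \<Longrightarrow> prj m (mult_op k) = mult_op m"
  unfolding mult_op_def by (simp add: prj_mk mod_mod_cancel)

lemma prj_const: "0 < k \<Longrightarrow> m dvd k \<Longrightarrow> prj m (mk_op k 1 (\<lambda>_. b)) = mk_op m 1 (\<lambda>_. b mod m)"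
  by (simp add: prj_mk)

lemma prj_P_ring:
  assumes k: "0 < k" and md: "m dvd k"
  shows "prj m ` P_ring k \<subseteq> P_ring m"
proof -
  have m: "0 < m" using dvd_pos[OF k md] .
  have "P_ring k \<subseteq> {h \<in> P_ring k. prj m h \<in> P_ring m}"
  proof (rule P_ring_least[OF preim_clone[OF k md P_ring_clone]])
    show "add_op k \<in> {h \<in> P_ring k. prj m h \<in> P_ring m}"
      using P_ring_gens prj_add[OF k md] by simp
    show "mult_op k \<in> {h \<in> P_ring k. prj m h \<in> P_ring m}"
      using P_ring_gens prj_mult[OF k md] by simp
    show "const_ops k \<subseteq> {h \<in> P_ring k. prj m h \<in> P_ring m}"
    proof
      fix c assume c: "c \<in> const_ops k"
      then obtain b where cb: "c = mk_op k 1 (\<lambda>_. b)" unfolding const_ops_def by blast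
      have "mk_op m 1 (\<lambda>_. b mod m) \<in> const_ops m" using m unfolding const_ops_def by auto
      then have "prj m c \<in> P_ring m" using P_ring_gens(3) prj_const[OF k md] cb by auto
      then show "c \<in> {h \<in> P_ring k. prj m h \<in> P_ring m}" using c P_ring_gens(3) by blast
    qed
  qed
  then show ?thesis by blast
qed

lemma choose_list:
  assumes "\<forall>g\<in>set gs. \<exists>h. P g h"
  shows "\<exists>hs. map fst (zip gs hs) = gs \<and> length hs = length gs \<and> (\<forall>i<length gs. P (gs ! i) (hs ! i))"
proof -
  let ?hs = "map (\<lambda>g. SOME h. P g h) gs"
  have "\<forall>i<length gs. P (gs ! i) (?hs ! i)"
    using assms by (auto intro: someI_ex)
  then show ?thesis by (intro exI[of _ ?hs]) simp
qed

lemma prj_image_clone: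
  assumes k: "0 < k" and md: "m dvd k" and C: "is_clone k C" and CP: "C \<subseteq> P_ring k"
  shows "is_clone m (prj m ` C)"
  unfolding is_clone_def
proof (intro conjI allI impI)
  have m: "0 < m" using dvd_pos[OF k md] .
  show "prj m ` C \<subseteq> all_ops m" using prj_all_ops[OF m] clone_sub[OF C] by blast
next
  fix n i :: nat assume ni: "0 < n \<and> i < n"
  have "proj_op k n i \<in> C" using clone_proj[OF C] ni unfolding proj_op_def by simp
  moreover have "prj m (proj_op k n i) = proj_op m n i"
    unfolding proj_op_def using prj_proj[OF k md] ni by simp
  ultimately show "proj_op m n i \<in> prj m ` C" by (metis image_eqI)
next
  fix a' f a gs
  assume A: "(a', f) \<in> prj m ` C \<and> length gs = a' \<and> 0 < a \<and> (\<forall>g\<in>set gs. (a, g) \<in> prj m ` C)"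
  then obtain H where H: "H \<in> C" "prj m H = (a', f)" by (metis imageE)
  have fH: "fst H = a'" using arg_cong[OF H(2), of fst] by simp
  have "H = (a', snd H)" using fH by (cases H) simp
  then have HP: "(a', snd H) \<in> C" using H(1) by simp
  have len: "length gs = a'" and a: "0 < a" using A by simp_all
  have ex: "\<forall>g\<in>set gs. \<exists>h. (a, h) \<in> C \<and> prj m (a, h) = (a, g)"
  proof
    fix g assume "g \<in> set gs"
    then have "(a, g) \<in> prj m ` C" using A by simp
    then obtain G where G: "G \<in> C" "prj m G = (a, g)" by (metis imageE)
    have "fst G = a" using arg_cong[OF G(2), of fst] by simp
    then have "G = (a, snd G)" by (cases G) simp
    then show "\<exists>h. (a, h) \<in> C \<and> prj m (a, h) = (a, g)" using G by (intro exI[of _ "snd G"]) simp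
  qed
  obtain hs where hs: "length hs = length gs" "\<forall>i<length gs. (a, hs ! i) \<in> C \<and> prj m (a, hs ! i) = (a, gs ! i)"
    using choose_list[OF ex] by blast
  have hsC: "\<forall>h\<in>set hs. (a, h) \<in> C" using hs by (metis in_set_conv_nth)
  have Hc: "mk_op k a (\<lambda>xs. snd H (map (\<lambda>h. h xs) hs)) \<in> C"
    using clone_comp[OF C HP _ a hsC] hs(1) len by simp
  have gs_eq: "map (\<lambda>h. snd (prj m (a, h))) hs = gs"
    using hs by (intro nth_equalityI) auto
  have HPr: "(a', snd H) \<in> P_ring k" using HP CP by blast
  have "prj m (mk_op k a (\<lambda>xs. snd H (map (\<lambda>h. h xs) hs))) =
    mk_op m a (\<lambda>xs. snd (prj m (a', snd H)) (map (\<lambda>g. g xs) (map (\<lambda>g. snd (prj m (a, g))) hs)))"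
  proof (rule prj_comp[OF k md])
    show "(a', snd H) \<in> all_ops k" using HPr P_ring_all_ops by blast
    show "pres k m (a', snd H)" using P_ring_pres[OF k md HPr] .
    show "length hs = a'" using hs(1) len by simp
    show "\<forall>g\<in>set hs. (a, g) \<in> all_ops k" using hsC CP P_ring_all_ops by blast
  qed
  also have "\<dots> = mk_op m a (\<lambda>xs. f (map (\<lambda>g. g xs) gs))"
  proof -
    have "prj m (a', snd H) = (a', f)" using H(2) \<open>H = (a', snd H)\<close> by simp
    then have "snd (prj m (a', snd H)) = f" by simp
    then show ?thesis using gs_eq by simp
  qed
  finally show "mk_op m a (\<lambda>xs. f (map (\<lambda>g. g xs) gs)) \<in> prj m ` C"
    using Hc by (intro image_eqI[where x="mk_op k a (\<lambda>xs. snd H (map (\<lambda>h. h xs) hs))"]) simp_all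
qed

lemma P_group_I: "0 < a \<Longrightarrow> mk_op k a (\<lambda>xs. (a0 + (\<Sum>i<a. c i * xs ! i)) mod k) \<in> P_group k"
  unfolding P_group_def by blast

lemma P_group_E: "x \<in> P_group k \<Longrightarrow> (\<And>a a0 c. x = mk_op k a (\<lambda>xs. (a0 + (\<Sum>i<a. c i * xs ! i)) mod k) \<Longrightarrow> 0 < a \<Longrightarrow> P) \<Longrightarrow> P"
  unfolding P_group_def by blast

lemma lift:
  assumes k: "0 < k" and md: "m dvd k"
  shows "P_ring m \<subseteq> prj m ` P_ring k"
proof (rule P_ring_least[OF prj_image_clone[OF k md P_ring_clone subset_refl]])
  show "add_op m \<in> prj m ` P_ring k" using P_ring_gens(1) prj_add[OF k md] by (metis image_eqI)
  show "mult_op m \<in> prj m ` P_ring k" using P_ring_gens(2) prj_mult[OF k md] by (metis image_eqI)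
  show "const_ops m \<subseteq> prj m ` P_ring k"
  proof
    fix c assume "c \<in> const_ops m"
    then obtain b where cb: "c = mk_op m 1 (\<lambda>_. b)" "b < m" unfolding const_ops_def by blast
    have bk: "b < k" using cb(2) dvd_le_pos[OF k md] by simp
    have "mk_op k 1 (\<lambda>_. b) \<in> P_ring k" using P_ring_gens(3) bk unfolding const_ops_def by blast
    moreover have "prj m (mk_op k 1 (\<lambda>_. b)) = c" using prj_const[OF k md] cb by simp
    ultimately show "c \<in> prj m ` P_ring k" by (metis image_eqI)
  qed
qed

lemma prj_P_group:
  assumes k: "0 < k" and md: "m dvd k"
  shows "prj m ` P_group k = P_group m"
proof -
  have e: "prj m (mk_op k a (\<lambda>xs. (a0 + (\<Sum>i<a. c i * xs ! i)) mod k)) =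
    mk_op m a (\<lambda>xs. (a0 + (\<Sum>i<a. c i * xs ! i)) mod m)" for a a0 c
    by (simp add: prj_mk[OF k md] mod_mod_cancel[OF md])
  show ?thesis
  proof
    show "prj m ` P_group k \<subseteq> P_group m"
    proof
      fix x assume "x \<in> prj m ` P_group k"
      then obtain y where y: "y \<in> P_group k" "x = prj m y" by blast
      from y(1) obtain a a0 c where "y = mk_op k a (\<lambda>xs. (a0 + (\<Sum>i<a. c i * xs ! i)) mod k)" "0 < a"
        by (rule P_group_E)
      then show "x \<in> P_group m" using y(2) e[of a a0 c] P_group_I[of a m a0 c] by simp
    qed
    show "P_group m \<subseteq> prj m ` P_group k"
    proof
      fix x assume "x \<in> P_group m"
      then obtain a a0 c where x: "x = mk_op m a (\<lambda>xs. (a0 + (\<Sum>i<a. c i * xs ! i)) mod m)" "0 < a"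
        by (rule P_group_E)
      have "mk_op k a (\<lambda>xs. (a0 + (\<Sum>i<a. c i * xs ! i)) mod k) \<in> P_group k"
        using x(2) by (rule P_group_I)
      then show "x \<in> prj m ` P_group k" using e[of a a0 c] x(1) by (intro image_eqI) auto
    qed
  qed
qed

lemma zero_P_group: "0 < a \<Longrightarrow> mk_op n a (\<lambda>_. 0) \<in> P_group n"
proof -
  assume a: "0 < a"
  have "mk_op n a (\<lambda>xs. (0 + (\<Sum>i<a. (\<lambda>_. 0) i * xs ! i)) mod n) \<in> P_group n"
    using a by (rule P_group_I)
  then show ?thesis by simp
qed

lemma mod_one_mult: "e mod m = 1 mod m \<Longrightarrow> (e * y) mod m = y mod (m::nat)"
  by (metis mod_mult_left_eq mult_1)

lemma mod_zero_mult: "e mod n = 0 \<Longrightarrow> (e * y) mod n = (0::nat)"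
  by (metis mod_mult_left_eq mult_zero_left mod_0)

lemma lin_mod:
  assumes "e1 mod m = 1 mod m" "e2 mod m = 0"
  shows "(e1 * y + e2 * z) mod m = y mod (m::nat)"
proof -
  have "(e1 * y + e2 * z) mod m = ((e1 * y) mod m + (e2 * z) mod m) mod m" by (rule mod_add_eq[symmetric])
  also have "\<dots> = (y mod m + 0) mod m" using mod_one_mult[OF assms(1)] mod_zero_mult[OF assms(2)] by simp
  finally show ?thesis by simp
qed

lemma lift0:
  assumes k: "0 < k" and md: "m dvd k" and nd: "n dvd k"
    and e1: "e mod m = 1 mod m" and e0: "e mod n = 0" and g: "g \<in> P_ring m"
  shows "\<exists>h\<in>P_ring k. prj m h = g \<and> prj n h = mk_op n (fst g) (\<lambda>_. 0)"
proof -
  obtain H where H: "H \<in> P_ring k" "prj m H = g" using lift[OF k md] g by blast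
  define a where "a = fst H"
  have ag: "fst g = a" using arg_cong[OF H(2), of fst] a_def by simp
  have HA: "H \<in> all_ops k" using H(1) P_ring_all_ops by blast
  have a: "0 < a" using all_ops_pos[OF HA] a_def by simp
  have Hm: "mk_op k a (snd H) = H" using all_ops_mk[OF HA] a_def by simp
  have "mk_op k 1 (\<lambda>xs. (0 + (\<Sum>i<1. (\<lambda>_. e) i * xs ! i)) mod k) \<in> P_group k"
    by (rule P_group_I) simp
  then have L: "mk_op k 1 (\<lambda>ys. (e * ys ! 0) mod k) \<in> P_ring k" using P_group_P_ring[OF k] by auto
  have H': "mk_op k a (\<lambda>xs. (\<lambda>ys. (e * ys ! 0) mod k) [snd H xs]) \<in> P_ring k"
  proof (rule comp1_mk[OF P_ring_clone L])
    show "mk_op k a (snd H) \<in> P_ring k" using Hm H(1) by simp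
    show "0 < a" by (rule a)
    fix xs assume "valid_args k a xs"
    then show "snd H xs < k" using all_ops_lt[of a "snd H" k] HA a_def by simp
  qed
  have pm: "prj m (mk_op k a (\<lambda>xs. (\<lambda>ys. (e * ys ! 0) mod k) [snd H xs])) = g"
  proof -
    have "prj m (mk_op k a (\<lambda>xs. (\<lambda>ys. (e * ys ! 0) mod k) [snd H xs])) = mk_op m a (\<lambda>xs. (e * snd H xs) mod k mod m)"
      by (simp add: prj_mk[OF k md])
    also have "\<dots> = mk_op m a (\<lambda>xs. snd H xs mod m)"
      by (simp add: mod_mod_cancel[OF md] mod_one_mult[OF e1])
    also have "\<dots> = prj m H" unfolding prj_def a_def ..
    finally show ?thesis using H(2) by simp
  qed
  have pn: "prj n (mk_op k a (\<lambda>xs. (\<lambda>ys. (e * ys ! 0) mod k) [snd H xs])) = mk_op n (fst g) (\<lambda>_. 0)"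
  proof -
    have "prj n (mk_op k a (\<lambda>xs. (\<lambda>ys. (e * ys ! 0) mod k) [snd H xs])) = mk_op n a (\<lambda>xs. (e * snd H xs) mod k mod n)"
      by (simp add: prj_mk[OF k nd])
    also have "\<dots> = mk_op n a (\<lambda>xs. 0)"
      by (simp add: mod_mod_cancel[OF nd] mod_zero_mult[OF e0])
    finally show ?thesis using ag by simp
  qed
  show ?thesis using H' pm pn by blast
qed

lemma crt_unit:
  assumes cop: "coprime m n" and n: "0 < (n::nat)"
  shows "\<exists>e. e mod m = 1 mod m \<and> e mod n = 0"
proof -
  have n0: "n \<noteq> 0" using n by simp
  have "\<exists>x y. n * x = m * y + gcd n m" using bezout_nat[OF n0, of m] .
  then obtain x y where xy: "n * x = m * y + gcd n m" by blast
  have "coprime n m" using cop by (simp only: coprime_commute)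
  then have "gcd n m = 1" by (simp only: coprime_iff_gcd_eq_1)
  then have nx: "n * x = m * y + 1" using xy by simp
  have "(n * x) mod m = 1 mod m" unfolding nx by (rule mod_mult_self4)
  moreover have "(n * x) mod n = 0" by simp
  ultimately show ?thesis by (intro exI[of _ "n * x"]) (rule conjI)
qed

lemma J_D: "C \<in> J k \<Longrightarrow> is_clone k C \<and> P_group k \<subseteq> C \<and> C \<subseteq> P_ring k"
  unfolding J_def by simp

lemma J_I: "is_clone k C \<Longrightarrow> P_group k \<subseteq> C \<Longrightarrow> C \<subseteq> P_ring k \<Longrightarrow> C \<in> J k"
  unfolding J_def by simp

lemma J_prj:
  assumes k: "0 < k" and md: "m dvd k" and C: "C \<in> J k"
  shows "prj m ` C \<in> J m"
proof (rule J_I)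
  have c: "is_clone k C" "P_group k \<subseteq> C" "C \<subseteq> P_ring k" using J_D[OF C] by simp_all
  show "is_clone m (prj m ` C)" by (rule prj_image_clone[OF k md c(1) c(3)])
  show "P_group m \<subseteq> prj m ` C" using prj_P_group[OF k md] c(2) by blast
  show "prj m ` C \<subseteq> P_ring m" using prj_P_ring[OF k md] c(3) by blast
qed

lemma key:
  assumes k: "k = m * n" and m: "0 < m" and n: "0 < n" and cop: "coprime m n"
    and e1: "e1 mod m = 1 mod m" "e1 mod n = 0" and e2: "e2 mod m = 0" "e2 mod n = 1 mod n"
    and C: "C \<in> J k" and h: "h \<in> P_ring k"
    and hm: "prj m h \<in> prj m ` C" and hn: "prj n h \<in> prj n ` C"
  shows "h \<in> C"
proof -
  have k0: "0 < k" using k m n by simp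
  have md: "m dvd k" and nd: "n dvd k" using k by simp_all
  have c: "is_clone k C" "P_group k \<subseteq> C" "C \<subseteq> P_ring k" using J_D[OF C] by simp_all
  obtain h1 where h1: "h1 \<in> C" "prj m h1 = prj m h" using hm by (metis imageE)
  obtain h2 where h2: "h2 \<in> C" "prj n h2 = prj n h" using hn by (metis imageE)
  define a where "a = fst h"
  have f1: "fst h1 = a" using arg_cong[OF h1(2), of fst] a_def by simp
  have f2: "fst h2 = a" using arg_cong[OF h2(2), of fst] a_def by simp
  have hA: "h \<in> all_ops k" using h P_ring_all_ops by blast
  have h1P: "h1 \<in> P_ring k" and h2P: "h2 \<in> P_ring k" using h1(1) h2(1) c(3) by blast+
  have h1A: "h1 \<in> all_ops k" and h2A: "h2 \<in> all_ops k" using h1P h2P P_ring_all_ops by blast+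
  have a: "0 < a" using all_ops_pos[OF hA] a_def by simp
  have "mk_op k 2 (\<lambda>xs. (0 + (\<Sum>i<2. (\<lambda>i. if i = 0 then e1 else e2) i * xs ! i)) mod k) \<in> P_group k"
    by (rule P_group_I) simp
  also have "mk_op k 2 (\<lambda>xs. (0 + (\<Sum>i<2. (\<lambda>i. if i = 0 then e1 else e2) i * xs ! i)) mod k) =
     mk_op k 2 (\<lambda>ys. (e1 * ys ! 0 + e2 * ys ! 1) mod k)"
    by (simp add: numeral_2_eq_2)
  finally have L: "mk_op k 2 (\<lambda>ys. (e1 * ys ! 0 + e2 * ys ! 1) mod k) \<in> C" using c(2) by blast
  have m1: "mk_op k a (snd h1) \<in> C" using all_ops_mk[OF h1A] f1 h1(1) by simp
  have m2: "mk_op k a (snd h2) \<in> C" using all_ops_mk[OF h2A] f2 h2(1) by simp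
  have comb: "mk_op k a (\<lambda>xs. (\<lambda>ys. (e1 * ys ! 0 + e2 * ys ! 1) mod k) [snd h1 xs, snd h2 xs]) \<in> C"
  proof (rule comp2_mk[OF c(1) L m1 m2 a])
    fix xs assume v: "valid_args k a xs"
    have "(a, snd h1) \<in> all_ops k" using h1A f1 by (cases h1) simp
    moreover have "(a, snd h2) \<in> all_ops k" using h2A f2 by (cases h2) simp
    ultimately show "snd h1 xs < k \<and> snd h2 xs < k"
      using all_ops_lt[of a "snd h1" k xs] all_ops_lt[of a "snd h2" k xs] v by simp
  qed
  have "mk_op k a (\<lambda>xs. (\<lambda>ys. (e1 * ys ! 0 + e2 * ys ! 1) mod k) [snd h1 xs, snd h2 xs]) = mk_op k a (snd h)"
  proof (rule mk_op_cong)
    fix xs assume v: "valid_args k a xs"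
    have lt: "snd h xs < k" using all_ops_lt[of a "snd h" k xs] hA a_def v by simp
    have p1: "snd h1 xs mod m = snd h xs mod m"
      using prj_eq_mod[OF k0 md P_ring_pres[OF k0 md h1P] P_ring_pres[OF k0 md h] h1(2)] v f1 by simp
    have p2: "snd h2 xs mod n = snd h xs mod n"
      using prj_eq_mod[OF k0 nd P_ring_pres[OF k0 nd h2P] P_ring_pres[OF k0 nd h] h2(2)] v f2 by simp
    have "(e1 * snd h1 xs + e2 * snd h2 xs) mod m = snd h xs mod m"
      using lin_mod[OF e1(1) e2(1)] p1 by simp
    moreover have "(e1 * snd h1 xs + e2 * snd h2 xs) mod n = snd h xs mod n"
      using lin_mod[OF e2(2) e1(2), of "snd h2 xs" "snd h1 xs"] p2 by (simp add: add.commute)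
    ultimately have "[e1 * snd h1 xs + e2 * snd h2 xs = snd h xs] (mod m * n)"
      using coprime_cong_mult_nat[OF _ _ cop] unfolding cong_def by blast
    then have "(e1 * snd h1 xs + e2 * snd h2 xs) mod k = snd h xs"
      using lt k unfolding cong_def by simp
    then show "(\<lambda>ys. (e1 * ys ! 0 + e2 * ys ! 1) mod k) [snd h1 xs, snd h2 xs] = snd h xs" by simp
  qed
  also have "mk_op k a (snd h) = h" using all_ops_mk[OF hA] a_def by simp
  finally show ?thesis using comb by simp
qed

lemma all_ops_triv:
  assumes k1: "k \<le> 1" and h: "h \<in> all_ops k"
  shows "h = proj_op k (fst h) 0"
proof -
  have "h = mk_op k (fst h) (snd h)" using all_ops_mk[OF h] by simp
  also have "\<dots> = mk_op k (fst h) (\<lambda>xs. xs ! 0)"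
  proof (rule mk_op_cong)
    fix xs assume v: "valid_args k (fst h) xs"
    have "snd h xs < k" using all_ops_lt[of "fst h" "snd h" k xs] h v by simp
    moreover have "xs ! 0 < k" using valid_nth[OF v] all_ops_pos[OF h] by blast
    ultimately show "snd h xs = xs ! 0" using k1 by simp
  qed
  finally show ?thesis unfolding proj_op_def .
qed

lemma J_triv:
  assumes k1: "k \<le> 1"
  shows "J k = {all_ops k}"
proof -
  have sub: "all_ops k \<subseteq> C" if C: "is_clone k C" for C
  proof
    fix h assume h: "h \<in> all_ops k"
    have "proj_op k (fst h) 0 \<in> C" using clone_proj[OF C, of 0 "fst h"] all_ops_pos[OF h]
      unfolding proj_op_def by simp
    then show "h \<in> C" using all_ops_triv[OF k1 h] by simp
  qed
  have "all_ops k \<in> J k"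
  proof (rule J_I)
    show "is_clone k (all_ops k)" by (rule clone_all_ops)
    show "P_group k \<subseteq> all_ops k"
    proof
      fix x assume "x \<in> P_group k"
      then obtain a a0 c where x: "x = mk_op k a (\<lambda>xs. (a0 + (\<Sum>i<a. c i * xs ! i)) mod k)" "0 < a"
        by (rule P_group_E)
      show "x \<in> all_ops k" unfolding x(1)
        by (rule mk_op_in_all_ops[OF x(2)]) (simp add: valid_pos[OF _ x(2)])
    qed
    show "all_ops k \<subseteq> P_ring k" by (rule sub[OF P_ring_clone])
  qed
  moreover have "C = all_ops k" if "C \<in> J k" for C
    using J_D[OF that] clone_sub sub by blast
  ultimately show ?thesis by blast
qed

lemma surj_part:
  assumes k: "k = m * n" and m: "0 < m" and n: "0 < n"
    and e1: "e1 mod m = 1 mod m" "e1 mod n = 0" and e2: "e2 mod m = 0" "e2 mod n = 1 mod n"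
    and C1: "C1 \<in> J m" and C2: "C2 \<in> J n"
  shows "\<exists>C\<in>J k. prj m ` C = C1 \<and> prj n ` C = C2"
proof -
  have k0: "0 < k" using k m n by simp
  have md: "m dvd k" and nd: "n dvd k" using k by simp_all
  have c1: "is_clone m C1" "P_group m \<subseteq> C1" "C1 \<subseteq> P_ring m" using J_D[OF C1] by simp_all
  have c2: "is_clone n C2" "P_group n \<subseteq> C2" "C2 \<subseteq> P_ring n" using J_D[OF C2] by simp_all
  define C where "C = {h \<in> P_ring k. prj m h \<in> C1} \<inter> {h \<in> P_ring k. prj n h \<in> C2}"
  have Cc: "is_clone k C" unfolding C_def
    by (rule clone_Int[OF preim_clone[OF k0 md c1(1)] preim_clone[OF k0 nd c2(1)]])
  have CP: "C \<subseteq> P_ring k" unfolding C_def by blast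
  have GC: "P_group k \<subseteq> C"
  proof
    fix h assume h: "h \<in> P_group k"
    have "h \<in> P_ring k" using h P_group_P_ring[OF k0] by blast
    moreover have "prj m h \<in> C1" using h prj_P_group[OF k0 md] c1(2) by blast
    moreover have "prj n h \<in> C2" using h prj_P_group[OF k0 nd] c2(2) by blast
    ultimately show "h \<in> C" unfolding C_def by blast
  qed
  have CJ: "C \<in> J k" using J_I[OF Cc GC CP] .
  have im1: "prj m ` C = C1"
  proof
    show "prj m ` C \<subseteq> C1" unfolding C_def by blast
    show "C1 \<subseteq> prj m ` C"
    proof
      fix g assume g: "g \<in> C1"
      have gP: "g \<in> P_ring m" using g c1(3) by blast
      have a: "0 < fst g" using all_ops_pos gP P_ring_all_ops by blast
      obtain h where h: "h \<in> P_ring k" "prj m h = g" "prj n h = mk_op n (fst g) (\<lambda>_. 0)"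
        using lift0[OF k0 md nd e1 gP] by blast
      have "mk_op n (fst g) (\<lambda>_. 0) \<in> C2" using zero_P_group[OF a] c2(2) by blast
      then have "h \<in> C" unfolding C_def using h g by simp
      then show "g \<in> prj m ` C" using h(2) by (intro image_eqI[of _ _ h]) simp_all
    qed
  qed
  have im2: "prj n ` C = C2"
  proof
    show "prj n ` C \<subseteq> C2" unfolding C_def by blast
    show "C2 \<subseteq> prj n ` C"
    proof
      fix g assume g: "g \<in> C2"
      have gP: "g \<in> P_ring n" using g c2(3) by blast
      have a: "0 < fst g" using all_ops_pos gP P_ring_all_ops by blast
      obtain h where h: "h \<in> P_ring k" "prj n h = g" "prj m h = mk_op m (fst g) (\<lambda>_. 0)"
        using lift0[OF k0 nd md e2(2) e2(1) gP] by blast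
      have "mk_op m (fst g) (\<lambda>_. 0) \<in> C1" using zero_P_group[OF a] c1(2) by blast
      then have "h \<in> C" unfolding C_def using h g by simp
      then show "g \<in> prj n ` C" using h(2) by (intro image_eqI[of _ _ h]) simp_all
    qed
  qed
  show ?thesis using CJ im1 im2 by blast
qed

lemma c0: "coprime (0::nat) n \<Longrightarrow> n = 1" by simp
lemma c0': "coprime (n::nat) 0 \<Longrightarrow> n = 1" by simp
lemma mult0_disj: "m = 0 \<or> n = 0 \<Longrightarrow> m * (n::nat) = 0" by (erule disjE) simp_all

theorem lemma1p1:
  fixes m n :: nat
  assumes "coprime m n"
  shows "\<exists>\<phi>. bij_betw \<phi> (J (m * n)) (J m \<times> J n) \<and>
           (\<forall>C\<in>J (m * n). \<forall>D\<in>J (m * n).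
              C \<subseteq> D \<longleftrightarrow> (fst (\<phi> C) \<subseteq> fst (\<phi> D) \<and> snd (\<phi> C) \<subseteq> snd (\<phi> D)))"
proof (cases "m = 0 \<or> n = 0")
  case True
  have le: "m \<le> 1 \<and> n \<le> 1"
  proof (cases "m = 0")
    case m0: True
    then have "coprime 0 n" using assms(1) by (simp only:)
    then have "n = 1" by (rule c0)
    then show ?thesis using m0 by simp
  next
    case False
    then have "n = 0" using True by simp
    then have "coprime m 0" using assms(1) by (simp only:)
    then have "m = 1" by (rule c0')
    then show ?thesis using \<open>n = 0\<close> by simp
  qed
  have "m * n = 0" using True by (rule mult0_disj)
  then have "m * n \<le> 1" by linarith
  then have J0: "J (m * n) = {all_ops (m * n)}" by (rule J_triv)
  have Jm: "J m = {all_ops m}" and Jn: "J n = {all_ops n}" using J_triv le by simp_all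
  have "bij_betw (\<lambda>_. (all_ops m, all_ops n)) (J (m * n)) (J m \<times> J n)"
    unfolding J0 Jm Jn bij_betw_def by simp
  moreover have "\<forall>C\<in>J (m * n). \<forall>D\<in>J (m * n). C \<subseteq> D \<longleftrightarrow>
     (fst ((\<lambda>_. (all_ops m, all_ops n)) C) \<subseteq> fst ((\<lambda>_. (all_ops m, all_ops n)) D) \<and>
      snd ((\<lambda>_. (all_ops m, all_ops n)) C) \<subseteq> snd ((\<lambda>_. (all_ops m, all_ops n)) D))"
    unfolding J0 by simp
  ultimately show ?thesis by (intro exI[of _ "\<lambda>_. (all_ops m, all_ops n)"] conjI)
next
  case False
  then have m: "0 < m" and n: "0 < n" by simp_all
  define k where "k = m * n"
  have k0: "0 < k" using k_def m n by simp
  have md: "m dvd k" and nd: "n dvd k" using k_def by simp_all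
  obtain e1 where e1: "e1 mod m = 1 mod m" "e1 mod n = 0" using crt_unit[OF assms n] by (elim exE conjE)
  have cop': "coprime n m" using assms by (rule coprime_commute[THEN iffD1])
  obtain e2 where e2: "e2 mod n = 1 mod n" "e2 mod m = 0" using crt_unit[OF cop' m] by (elim exE conjE)
  define \<phi> where "\<phi> = (\<lambda>C. (prj m ` C, prj n ` C))"
  have ord: "\<forall>C\<in>J k. \<forall>D\<in>J k. C \<subseteq> D \<longleftrightarrow> (fst (\<phi> C) \<subseteq> fst (\<phi> D) \<and> snd (\<phi> C) \<subseteq> snd (\<phi> D))"
  proof (intro ballI iffI)
    fix C D assume "C \<in> J k" "D \<in> J k" "C \<subseteq> D"
    then show "fst (\<phi> C) \<subseteq> fst (\<phi> D) \<and> snd (\<phi> C) \<subseteq> snd (\<phi> D)" unfolding \<phi>_def by auto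
  next
    fix C D assume C: "C \<in> J k" and D: "D \<in> J k"
      and s: "fst (\<phi> C) \<subseteq> fst (\<phi> D) \<and> snd (\<phi> C) \<subseteq> snd (\<phi> D)"
    show "C \<subseteq> D"
    proof
      fix h assume h: "h \<in> C"
      have hP: "h \<in> P_ring k" using h J_D[OF C] by blast
      have "prj m h \<in> prj m ` D" using s h unfolding \<phi>_def by auto
      moreover have "prj n h \<in> prj n ` D" using s h unfolding \<phi>_def by auto
      ultimately show "h \<in> D" using key[OF k_def m n assms e1 e2(2) e2(1) D hP] by blast
    qed
  qed
  have inj: "inj_on \<phi> (J k)"
  proof (rule inj_onI)
    fix C D assume C: "C \<in> J k" and D: "D \<in> J k" and e: "\<phi> C = \<phi> D"
    have o1: "C \<subseteq> D \<longleftrightarrow> (fst (\<phi> C) \<subseteq> fst (\<phi> D) \<and> snd (\<phi> C) \<subseteq> snd (\<phi> D))"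
      using ord C D by (elim ballE) auto
    have o2: "D \<subseteq> C \<longleftrightarrow> (fst (\<phi> D) \<subseteq> fst (\<phi> C) \<and> snd (\<phi> D) \<subseteq> snd (\<phi> C))"
      using ord C D by (elim ballE) auto
    have "C \<subseteq> D" using o1 e by simp
    moreover have "D \<subseteq> C" using o2 e by simp
    ultimately show "C = D" by (rule antisym)
  qed
  have img: "\<phi> ` J k = J m \<times> J n"
  proof
    show "\<phi> ` J k \<subseteq> J m \<times> J n"
      unfolding \<phi>_def using J_prj[OF k0 md] J_prj[OF k0 nd] by blast
    show "J m \<times> J n \<subseteq> \<phi> ` J k"
    proof
      fix p assume "p \<in> J m \<times> J n"
      then obtain C1 C2 where p: "p = (C1, C2)" "C1 \<in> J m" "C2 \<in> J n" by blast
      obtain C where "C \<in> J k" "prj m ` C = C1" "prj n ` C = C2"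
        using surj_part[OF k_def m n e1 e2(2) e2(1) p(2) p(3)] by blast
      then show "p \<in> \<phi> ` J k" unfolding \<phi>_def p(1) by blast
    qed
  qed
  have "bij_betw \<phi> (J k) (J m \<times> J n)" unfolding bij_betw_def using inj img by (rule conjI)
  then show ?thesis unfolding k_def[symmetric] using ord by (intro exI[of _ \<phi>] conjI)
qed

end
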